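(* Let $G=(V,E)$ be a finite simple undirected graph and let $\sigma=(\lambda_1,\lambda_2,\ldots,\lambda_m)$ be a coding sequence of $G$. Write $V=\{v_1,\ldots,v_m\}$, where $v_i$ corresponds to $\lambda_i$, and put $\mu(v_i)=\lambda_i$. Let $\{p_1,\ldots,p_k\}$ be the set of all distinct prime factors of $\lambda(\sigma)$, and suppose $G$ has $s\ge 0$ isolated vertices (so that $\lambda_1=\cdots=\lambda_s=1$ correspond to the isolated vertices $v_1,\ldots,v_s$). Define $S_j=\{v_j\}$ for $j=1,\ldots,s$ and $S_{s+j}=\{v_i\in V : p_j \text{ divides } \lambda_i\}$ for $j=1,\ldots,k$. Then $S=\{S_j : j=1,\ldots,s+k\}$ is a total clique covering of $G$. Moreover, for any vertex $v$ and any nonempty set $\{j_1,\ldots,j_r\}\subseteq\{1,\ldots,k\}$, we have $v\in S_{s+j_1}\cap\cdots\cap S_{s+j_r}$ and $v\notin S_{s+j}$ for all $j\in\{1,\ldots,k\}\setminus\{j_1,\ldots,j_r\}$ if and only if $\mu(v)=p_{j_1}p_{j_2}\cdots p_{j_r}$; and $v\in S_1\cup\cdots\cup S_s$ if and only if $\mu(v)=1$.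
   Context: All graphs are finite, simple and undirected. For a finite sequence $\sigma=(a_1,\ldots,a_m)$ of positive integers, $G[\sigma]$ is the graph with vertices $v_1,\ldots,v_m$ ($a_i$ is the label of $v_i$) where $v_iv_j$ is an edge iff $i\ne j$ and $\gcd(a_i,a_j)>1$. A coding sequence of a graph $G$ with $s\ge 0$ isolated vertices is defined as follows: if $G$ has a single vertex, $\sigma=(1)$; otherwise let $G_1$ be $G$ with its isolated vertices deleted, let $\sigma_1$ be a finite non-decreasing sequence of square-free integers greater than $1$ with $G_1\cong G[\sigma_1]$, and let $\sigma$ be $\sigma_1$ prefixed by $s$ entries equal to $1$; then $G\cong G[\sigma]$, the vertex with label $1$ being the isolated vertices. Entries greater than $1$ are non-trivial, and $\lambda(\sigma)$ denotes the least common multiple of the non-trivial entries of $\sigma$. A clique is a set of pairwise adjacent vertices. A set $S$ of cliques of $G$ is a total clique covering of $G$ if every vertex lies in some member of $S$ and every edge has both endpoints in some member of $S$. *)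

theory Defs
  imports Main "HOL-Computational_Algebra.Primes" "HOL-Computational_Algebra.Squarefree"
begin

definition simple_graph :: "'a set \<Rightarrow> ('a \<Rightarrow> 'a \<Rightarrow> bool) \<Rightarrow> bool" where
  "simple_graph V E \<longleftrightarrow> finite V \<and> (\<forall>x y. E x y \<longrightarrow> x \<in> V \<and> y \<in> V)
     \<and> (\<forall>x y. E x y \<longrightarrow> E y x) \<and> (\<forall>x. \<not> E x x)"

definition isolated_vertices :: "'a set \<Rightarrow> ('a \<Rightarrow> 'a \<Rightarrow> bool) \<Rightarrow> 'a set" where
  "isolated_vertices V E = {x \<in> V. \<forall>y \<in> V. \<not> E x y}"

text \<open>The sequence sigma = (lam 1, ..., lam m) is a coding sequence of the graph (V,E),
  with vertex v_i = vtx i carrying label lam i, and s the number of isolated vertices: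
  vtx is an isomorphism from G[sigma] onto (V,E), the first s labels are 1 (these are
  the isolated vertices), and the remaining labels form a non-decreasing sequence of
  square-free integers greater than 1.\<close>
definition coding_seq ::
  "'a set \<Rightarrow> ('a \<Rightarrow> 'a \<Rightarrow> bool) \<Rightarrow> nat \<Rightarrow> (nat \<Rightarrow> nat) \<Rightarrow> (nat \<Rightarrow> 'a) \<Rightarrow> nat \<Rightarrow> bool" where
  "coding_seq V E m lam vtx s \<longleftrightarrow>
     bij_betw vtx {1..m} V
   \<and> (\<forall>i\<in>{1..m}. \<forall>j\<in>{1..m}. E (vtx i) (vtx j) \<longleftrightarrow> i \<noteq> j \<and> gcd (lam i) (lam j) > 1)
   \<and> s = card (isolated_vertices V E)
   \<and> (\<forall>i\<in>{1..m}. i \<le> s \<longrightarrow> lam i = 1)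
   \<and> (\<forall>i\<in>{1..m}. s < i \<longrightarrow> lam i > 1 \<and> squarefree (lam i))
   \<and> (\<forall>i j. s < i \<longrightarrow> i \<le> j \<longrightarrow> j \<le> m \<longrightarrow> lam i \<le> lam j)"

definition seq_lcm :: "nat \<Rightarrow> (nat \<Rightarrow> nat) \<Rightarrow> nat" where
  "seq_lcm m lam = Lcm (lam ` {i \<in> {1..m}. lam i > 1})"

definition is_clique :: "'a set \<Rightarrow> ('a \<Rightarrow> 'a \<Rightarrow> bool) \<Rightarrow> 'a set \<Rightarrow> bool" where
  "is_clique V E C \<longleftrightarrow> C \<subseteq> V \<and> (\<forall>x\<in>C. \<forall>y\<in>C. x \<noteq> y \<longrightarrow> E x y)"

definition total_clique_covering :: "'a set \<Rightarrow> ('a \<Rightarrow> 'a \<Rightarrow> bool) \<Rightarrow> 'a set set \<Rightarrow> bool" where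
  "total_clique_covering V E S \<longleftrightarrow>
     (\<forall>C\<in>S. is_clique V E C)
   \<and> (\<forall>x\<in>V. \<exists>C\<in>S. x \<in> C)
   \<and> (\<forall>x y. E x y \<longrightarrow> (\<exists>C\<in>S. x \<in> C \<and> y \<in> C))"

definition cover_set :: "nat \<Rightarrow> (nat \<Rightarrow> nat) \<Rightarrow> (nat \<Rightarrow> 'a) \<Rightarrow> nat \<Rightarrow> (nat \<Rightarrow> nat) \<Rightarrow> nat \<Rightarrow> 'a set" where
  "cover_set m lam vtx s p j =
     (if j \<le> s then {vtx j} else {vtx i | i. i \<in> {1..m} \<and> p (j - s) dvd lam i})"

end

theory Submission
  imports Defs
begin

lemma pf_prod_primes:
  fixes P :: "nat set"
  assumes "finite P" "\<forall>q\<in>P. prime q"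
  shows "prime_factors (\<Prod>P) = P"
proof -
  have "0 \<notin> id ` P" using assms by auto
  then have "prime_factors (prod id P) = \<Union>((prime_factors \<circ> id) ` P)"
    using prime_factors_prod[OF assms(1)] by blast
  also have "\<dots> = P" using assms(2) by (auto simp: prime_prime_factors)
  finally show ?thesis by simp
qed

lemma sqf_prod:
  fixes n :: nat
  assumes "n > 0" "squarefree n"
  shows "n = \<Prod>(prime_factors n)"
proof -
  have m: "\<forall>q\<in>prime_factors n. multiplicity q n = 1"
    using assms squarefree_factorial_semiring'[of n] by auto
  have "n = (\<Prod>q \<in> prime_factors n. q ^ multiplicity q n)"
    using prime_factorization_nat[OF assms(1)] .
  also have "\<dots> = (\<Prod>q \<in> prime_factors n. q)"
    by (rule prod.cong) (auto simp: m)
  finally show ?thesis by simp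
qed

lemma sqf_eq_iff:
  fixes n :: nat and P :: "nat set"
  assumes "n > 0" "squarefree n" "finite P" "\<forall>q\<in>P. prime q"
  shows "n = \<Prod>P \<longleftrightarrow> prime_factors n = P"
  using sqf_prod[OF assms(1,2)] pf_prod_primes[OF assms(3,4)] by metis

theorem lemma1:
  fixes V :: "'a set" and E :: "'a \<Rightarrow> 'a \<Rightarrow> bool"
    and m s k :: nat and lam :: "nat \<Rightarrow> nat" and vtx :: "nat \<Rightarrow> 'a" and p :: "nat \<Rightarrow> nat"
  assumes "simple_graph V E"
    and "coding_seq V E m lam vtx s"
    and "bij_betw p {1..k} (prime_factors (seq_lcm m lam))"
  shows "total_clique_covering V E (cover_set m lam vtx s p ` {1..s+k})
    \<and> (\<forall>i\<in>{1..m}. \<forall>J. J \<subseteq> {1..k} \<and> J \<noteq> {} \<longrightarrow>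
           (((\<forall>j\<in>J. vtx i \<in> cover_set m lam vtx s p (s + j))
              \<and> (\<forall>j\<in>{1..k} - J. vtx i \<notin> cover_set m lam vtx s p (s + j)))
            \<longleftrightarrow> lam i = (\<Prod>j\<in>J. p j)))
    \<and> (\<forall>i\<in>{1..m}. vtx i \<in> (\<Union>j\<in>{1..s}. cover_set m lam vtx s p j) \<longleftrightarrow> lam i = 1)"
proof -
  define L where "L = seq_lcm m lam"
  define PF where "PF = prime_factors L"
  define C where "C = cover_set m lam vtx s p"
  note cs = assms(2)[unfolded coding_seq_def]
  have bij: "bij_betw vtx {1..m} V" using cs by (rule conjunct1)
  have inj: "inj_on vtx {1..m}" using bij by (simp add: bij_betw_def)
  have img: "vtx ` {1..m} = V" using bij by (simp add: bij_betw_def)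
  have edge0: "\<forall>i\<in>{1..m}. \<forall>j\<in>{1..m}. E (vtx i) (vtx j) \<longleftrightarrow> i \<noteq> j \<and> gcd (lam i) (lam j) > 1"
    using cs by (rule conjunct1[OF conjunct2])
  have edge: "\<And>i j. i\<in>{1..m} \<Longrightarrow> j\<in>{1..m} \<Longrightarrow> E (vtx i) (vtx j) \<longleftrightarrow> i \<noteq> j \<and> gcd (lam i) (lam j) > 1"
    using edge0 by blast
  have sdef: "s = card (isolated_vertices V E)" using cs by (rule conjunct1[OF conjunct2[OF conjunct2]])
  have low0: "\<forall>i\<in>{1..m}. i \<le> s \<longrightarrow> lam i = 1" using cs by (rule conjunct1[OF conjunct2[OF conjunct2[OF conjunct2]]])
  have high0: "\<forall>i\<in>{1..m}. s < i \<longrightarrow> lam i > 1 \<and> squarefree (lam i)" using cs by (rule conjunct1[OF conjunct2[OF conjunct2[OF conjunct2[OF conjunct2]]]])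
  have low: "\<And>i. i\<in>{1..m} \<Longrightarrow> i \<le> s \<Longrightarrow> lam i = 1" using low0 by blast
  have high: "\<And>i. i\<in>{1..m} \<Longrightarrow> s < i \<Longrightarrow> lam i > 1 \<and> squarefree (lam i)" using high0 by blast
  have finV: "finite V" using assms(1) simple_graph_def by blast
  have cardV: "card V = m" using bij_betw_same_card[OF bij] by simp
  have "s \<le> m" unfolding sdef cardV[symmetric]
    by (rule card_mono[OF finV]) (auto simp: isolated_vertices_def)
  have lam_pos: "\<And>i. i\<in>{1..m} \<Longrightarrow> lam i > 0 \<and> squarefree (lam i)"
    using low high by (metis not_le less_trans zero_less_one squarefree_1)
  have Lnz: "L \<noteq> 0" unfolding L_def seq_lcm_def by (subst Lcm_0_iff_nat) auto
  have ldvd: "\<And>i. i\<in>{1..m} \<Longrightarrow> lam i dvd L"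
  proof -
    fix i assume i: "i\<in>{1..m}"
    show "lam i dvd L"
    proof (cases "lam i > 1")
      case True then show ?thesis unfolding L_def seq_lcm_def using i by (intro dvd_Lcm) auto
    next
      case False then have "lam i = 1" using lam_pos[OF i] by linarith
      then show ?thesis by simp
    qed
  qed
  have pfsub: "\<And>i. i\<in>{1..m} \<Longrightarrow> prime_factors (lam i) \<subseteq> PF"
    unfolding PF_def using ldvd Lnz by (intro dvd_prime_factors) auto
  have pimg: "p ` {1..k} = PF" using assms(3) unfolding PF_def L_def bij_betw_def by blast
  have pinj: "inj_on p {1..k}" using assms(3) unfolding bij_betw_def by blast
  have pprime: "\<And>j. j\<in>{1..k} \<Longrightarrow> prime (p j)" using pimg unfolding PF_def by auto
  have qin: "\<And>q. prime q \<Longrightarrow> q dvd L \<Longrightarrow> \<exists>j\<in>{1..k}. q = p j"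
  proof -
    fix q assume "prime q" "q dvd L"
    then have "q \<in> PF" unfolding PF_def using Lnz by (simp add: in_prime_factors_iff)
    then show "\<exists>j\<in>{1..k}. q = p j" using pimg by (metis imageE)
  qed
  have Cmem: "\<And>i j. i\<in>{1..m} \<Longrightarrow> j \<ge> 1 \<Longrightarrow> vtx i \<in> C (s + j) \<longleftrightarrow> p j dvd lam i"
  proof -
    fix i j assume i: "i\<in>{1..m}" and j: "(j::nat) \<ge> 1"
    have "vtx i \<in> C (s + j) \<longleftrightarrow> (\<exists>i'. vtx i = vtx i' \<and> i' \<in> {1..m} \<and> p j dvd lam i')"
      unfolding C_def cover_set_def using j by auto
    also have "\<dots> \<longleftrightarrow> p j dvd lam i" using inj i by (metis inj_on_eq_iff)
    finally show "vtx i \<in> C (s + j) \<longleftrightarrow> p j dvd lam i" .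
  qed
  have gcdgt: "\<And>a b q. prime (q::nat) \<Longrightarrow> q dvd a \<Longrightarrow> q dvd b \<Longrightarrow> a > 0 \<Longrightarrow> gcd a b > 1"
  proof -
    fix a b q :: nat assume "prime q" "q dvd a" "q dvd b" "a > 0"
    then have "q dvd gcd a b" "gcd a b > 0" by auto
    then have "q \<le> gcd a b" by (simp add: dvd_imp_le)
    then show "gcd a b > 1" using prime_gt_1_nat[OF \<open>prime q\<close>] by linarith
  qed
  have clique: "\<forall>X\<in>C ` {1..s+k}. is_clique V E X"
  proof
    fix X assume "X \<in> C ` {1..s+k}"
    then obtain j where j: "j \<in> {1..s+k}" "X = C j" by blast
    show "is_clique V E X"
    proof (cases "j \<le> s")
      case True
      then have "X = {vtx j}" unfolding j C_def cover_set_def by simp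
      moreover have "vtx j \<in> V" using img j True \<open>s \<le> m\<close> by auto
      ultimately show ?thesis unfolding is_clique_def by auto
    next
      case False
      define t where "t = j - s"
      have t: "t \<in> {1..k}" "j = s + t" using False j unfolding t_def by auto
      have X: "X = {vtx i | i. i \<in> {1..m} \<and> p t dvd lam i}"
        unfolding j C_def cover_set_def t_def using False by simp
      show ?thesis unfolding is_clique_def
      proof
        show "X \<subseteq> V" unfolding X using img by auto
      next
        show "\<forall>x\<in>X. \<forall>y\<in>X. x \<noteq> y \<longrightarrow> E x y"
        proof (intro ballI impI)
          fix x y assume "x \<in> X" "y \<in> X" "x \<noteq> y"
          then obtain i i' where ii: "x = vtx i" "i\<in>{1..m}" "p t dvd lam i"
            "y = vtx i'" "i'\<in>{1..m}" "p t dvd lam i'" unfolding X by blast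
          have "i \<noteq> i'" using ii \<open>x \<noteq> y\<close> by auto
          moreover have "gcd (lam i) (lam i') > 1"
            using gcdgt[OF pprime[OF t(1)] ii(3) ii(6)] lam_pos[OF ii(2)] by simp
          ultimately show "E x y" using edge ii by blast
        qed
      qed
    qed
  qed
  have covers: "\<forall>x\<in>V. \<exists>X\<in>C ` {1..s+k}. x \<in> X"
  proof
    fix x assume "x \<in> V"
    then obtain i where i: "i \<in> {1..m}" "x = vtx i" using img by auto
    show "\<exists>X\<in>C ` {1..s+k}. x \<in> X"
    proof (cases "i \<le> s")
      case True
      then have "x \<in> C i" "i \<in> {1..s+k}" using i unfolding C_def cover_set_def by auto
      then show ?thesis by blast
    next
      case False
      then have "lam i \<noteq> 1" using high i by force
      then obtain q where q: "prime q" "q dvd lam i" using prime_factor_nat by blast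
      then obtain j where j: "j\<in>{1..k}" "q = p j" using qin ldvd[OF i(1)] dvd_trans by blast
      have "x \<in> C (s + j)" using Cmem i j q by auto
      moreover have "s + j \<in> {1..s+k}" using j by auto
      ultimately show ?thesis by blast
    qed
  qed
  have edges: "\<forall>x y. E x y \<longrightarrow> (\<exists>X\<in>C ` {1..s+k}. x \<in> X \<and> y \<in> X)"
  proof (intro allI impI)
    fix x y assume e: "E x y"
    have sg: "\<forall>x y. E x y \<longrightarrow> x \<in> V \<and> y \<in> V" using assms(1) unfolding simple_graph_def by (elim conjE)
    have "x \<in> V" "y \<in> V" using sg e by blast+
    then obtain i i' where ii: "i \<in> {1..m}" "x = vtx i" "i' \<in> {1..m}" "y = vtx i'" using img by auto
    then have g: "gcd (lam i) (lam i') > 1" using edge[OF ii(1) ii(3)] e ii(2,4) by simp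
    then have "gcd (lam i) (lam i') \<noteq> 1" by simp
    then obtain q where q: "prime q" "q dvd gcd (lam i) (lam i')" using prime_factor_nat by blast
    then have "q dvd lam i" "q dvd lam i'" by auto
    moreover have "q dvd L" using ldvd[OF ii(1)] \<open>q dvd lam i\<close> dvd_trans by blast
    ultimately obtain j where j: "j\<in>{1..k}" "q = p j" using qin q by blast
    have "x \<in> C (s + j)" "y \<in> C (s + j)" using Cmem ii j \<open>q dvd lam i\<close> \<open>q dvd lam i'\<close> by auto
    moreover have "s + j \<in> {1..s+k}" using j by auto
    ultimately show "\<exists>X\<in>C ` {1..s+k}. x \<in> X \<and> y \<in> X" by blast
  qed
  have P1: "total_clique_covering V E (C ` {1..s+k})"
    unfolding total_clique_covering_def using clique covers edges by blast
  have P2: "\<forall>i\<in>{1..m}. \<forall>J. J \<subseteq> {1..k} \<and> J \<noteq> {} \<longrightarrow>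
           (((\<forall>j\<in>J. vtx i \<in> C (s + j)) \<and> (\<forall>j\<in>{1..k} - J. vtx i \<notin> C (s + j)))
            \<longleftrightarrow> lam i = (\<Prod>j\<in>J. p j))"
  proof (intro ballI allI impI)
    fix i J assume i: "i \<in> {1..m}" and J: "J \<subseteq> {1..k} \<and> J \<noteq> {}"
    have finJ: "finite J" using J finite_subset by blast
    have injJ: "inj_on p J" using pinj J inj_on_subset by blast
    have prodeq: "(\<Prod>j\<in>J. p j) = \<Prod>(p ` J)" using prod.reindex[OF injJ, of id] by simp
    have pJ: "\<forall>q\<in>p ` J. prime q" using pprime J by auto
    have "((\<forall>j\<in>J. vtx i \<in> C (s + j)) \<and> (\<forall>j\<in>{1..k} - J. vtx i \<notin> C (s + j)))
          \<longleftrightarrow> ((\<forall>j\<in>J. p j dvd lam i) \<and> (\<forall>j\<in>{1..k} - J. \<not> p j dvd lam i))"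
    proof -
      have "\<forall>j\<in>{1..k}. vtx i \<in> C (s + j) \<longleftrightarrow> p j dvd lam i" using Cmem[OF i] by auto
      then show ?thesis using J by blast
    qed
    also have "\<dots> \<longleftrightarrow> prime_factors (lam i) = p ` J"
    proof
      assume a: "(\<forall>j\<in>J. p j dvd lam i) \<and> (\<forall>j\<in>{1..k} - J. \<not> p j dvd lam i)"
      show "prime_factors (lam i) = p ` J"
      proof
        show "prime_factors (lam i) \<subseteq> p ` J"
        proof
          fix q assume qq: "q \<in> prime_factors (lam i)"
          then obtain j where "j \<in> {1..k}" "q = p j" using pfsub[OF i] pimg by blast
          moreover have "q dvd lam i" using qq by auto
          ultimately show "q \<in> p ` J" using a by blast
        qed
      next
        show "p ` J \<subseteq> prime_factors (lam i)"
          using a pJ lam_pos[OF i] by (auto simp: in_prime_factors_iff)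
      qed
    next
      assume b: "prime_factors (lam i) = p ` J"
      show "(\<forall>j\<in>J. p j dvd lam i) \<and> (\<forall>j\<in>{1..k} - J. \<not> p j dvd lam i)"
      proof (intro conjI ballI)
        fix j assume "j \<in> J" then show "p j dvd lam i" using b
          by (metis imageI in_prime_factors_imp_dvd)
      next
        fix j assume j: "j \<in> {1..k} - J"
        show "\<not> p j dvd lam i"
        proof
          assume "p j dvd lam i"
          then have "p j \<in> p ` J" using b pprime j lam_pos[OF i] by (auto simp: in_prime_factors_iff)
          then obtain j' where "j' \<in> J" "p j = p j'" by blast
          then show False using pinj j J by (metis DiffE inj_on_eq_iff subsetD)
        qed
      qed
    qed
    also have "\<dots> \<longleftrightarrow> lam i = \<Prod>(p ` J)"
      using sqf_eq_iff[of "lam i" "p ` J"] lam_pos[OF i] finJ pJ by auto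
    finally show "((\<forall>j\<in>J. vtx i \<in> C (s + j)) \<and> (\<forall>j\<in>{1..k} - J. vtx i \<notin> C (s + j)))
            \<longleftrightarrow> lam i = (\<Prod>j\<in>J. p j)" using prodeq by simp
  qed
  have P3: "\<forall>i\<in>{1..m}. vtx i \<in> (\<Union>j\<in>{1..s}. C j) \<longleftrightarrow> lam i = 1"
  proof
    fix i assume i: "i \<in> {1..m}"
    have "vtx i \<in> (\<Union>j\<in>{1..s}. C j) \<longleftrightarrow> (\<exists>j\<in>{1..s}. vtx i = vtx j)"
      unfolding C_def cover_set_def by auto
    also have "\<dots> \<longleftrightarrow> i \<le> s"
    proof
      assume "\<exists>j\<in>{1..s}. vtx i = vtx j"
      then obtain j where j: "j \<in> {1..s}" "vtx i = vtx j" by blast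
      then have "j \<in> {1..m}" using \<open>s \<le> m\<close> by auto
      then have "i = j" using inj i j(2) inj_on_eq_iff by metis
      then show "i \<le> s" using j by auto
    next
      assume "i \<le> s" then show "\<exists>j\<in>{1..s}. vtx i = vtx j" using i by auto
    qed
    also have "\<dots> \<longleftrightarrow> lam i = 1" using low high i by force
    finally show "vtx i \<in> (\<Union>j\<in>{1..s}. C j) \<longleftrightarrow> lam i = 1" .
  qed
  show ?thesis using P1 P2 P3 unfolding C_def by blast
qed

end
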